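(* For every $n\equiv 2\pmod 4$ with $n\ge 6$, there exists a Heffter array $H(n;5)$.
   Context: A Heffter array $H(n;k)$ is an $n\times n$ array in which some cells are filled with nonzero integers and the others are empty, such that: each row and each column contains exactly $k$ filled cells; the entries of every row and of every column sum to $0$ modulo $2nk+1$; and for each integer $1\le x\le nk$, exactly one of $x$ or $-x$ appears in the array, and it appears exactly once. *)

theory Defs
  imports Main
begin

text \<open>An n x n partially filled array: rows and columns indexed by 0..<n,
  cell (i,j) is None if empty and Some e if filled with the integer e.\<close>

definition heffter :: "nat \<Rightarrow> nat \<Rightarrow> (nat \<Rightarrow> nat \<Rightarrow> int option) \<Rightarrow> bool" where
  "heffter n k A \<longleftrightarrow>
     (\<forall>i j. A i j \<noteq> None \<longrightarrow> i < n \<and> j < n) \<and>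
     (\<forall>i j e. A i j = Some e \<longrightarrow> e \<noteq> 0) \<and>
     (\<forall>i<n. card {j. j < n \<and> A i j \<noteq> None} = k) \<and>
     (\<forall>j<n. card {i. i < n \<and> A i j \<noteq> None} = k) \<and>
     (\<forall>i<n. (\<Sum>j\<in>{j. j < n \<and> A i j \<noteq> None}. the (A i j)) mod (2 * int n * int k + 1) = 0) \<and>
     (\<forall>j<n. (\<Sum>i\<in>{i. i < n \<and> A i j \<noteq> None}. the (A i j)) mod (2 * int n * int k + 1) = 0) \<and>
     (\<forall>x::int. 1 \<le> x \<and> x \<le> int n * int k \<longrightarrow>
        (\<exists>!p. p \<in> {0..<n} \<times> {0..<n} \<and>
              (A (fst p) (snd p) = Some x \<or> A (fst p) (snd p) = Some (- x))))"

definition heffter_exists :: "nat \<Rightarrow> nat \<Rightarrow> bool" where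
  "heffter_exists n k \<longleftrightarrow> (\<exists>A. heffter n k A)"

end

theory Submission
  imports Defs
begin

definition ve :: "nat \<Rightarrow> nat \<Rightarrow> nat \<Rightarrow> int" where
"ve N d a = (if d=0 then 1 + int a else if d=1 then 2*int N+1+int a
   else if d=2 then -(5*int N+2+2*int a) else if d=3 then 4*int N+1+int a else -(int N+1+int a))"

definition vo :: "nat \<Rightarrow> nat \<Rightarrow> nat \<Rightarrow> int" where
"vo N d a = (if d=0 then 8*int N - int a else if d=1 then -(10*int N - int a)
   else if d=2 then -(5*int N+1+2*int a) else if d=3 then -(4*int N - int a) else -(9*int N - int a))"

definition vv :: "nat \<Rightarrow> nat \<Rightarrow> nat \<Rightarrow> int" where
"vv N d i = (if even i then ve N d (i div 2) else vo N d (i div 2))"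

definition sw :: "nat \<Rightarrow> nat \<Rightarrow> nat \<Rightarrow> nat" where
"sw N i d = (if i = 2*N - 1 \<and> d = 1 then 4 else if i = 2*N - 1 \<and> d = 4 then 1 else d)"

definition dd :: "nat \<Rightarrow> nat \<Rightarrow> nat \<Rightarrow> nat" where
"dd N i j = (j + 2*N - i) mod (2*N)"

definition HA :: "nat \<Rightarrow> nat \<Rightarrow> nat \<Rightarrow> int option" where
"HA N i j = (if i < 2*N \<and> j < 2*N \<and> dd N i j < 5 then Some (vv N (sw N i (dd N i j)) i) else None)"

lemma vv_even[simp]: "vv N d (2*a) = ve N d a"
  by (simp add: vv_def)
lemma vv_odd[simp]: "vv N d (Suc (2*a)) = vo N d a"
  by (simp add: vv_def)

lemma sum5: "(\<Sum>d<(5::nat). f d) = f 0 + f 1 + f 2 + f 3 + (f 4 :: int)"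
  by (simp add: eval_nat_numeral)

lemma mod2n: assumes "(x::nat) < 2*n" shows "x mod n = (if x < n then x else x - n)"
proof (cases "x < n")
  case False
  then have "x mod n = (x - n) mod n" using le_mod_geq[of n x] by simp
  also have "\<dots> = x - n" using assms False by (intro mod_less) auto
  finally show ?thesis using False by simp
qed simp

lemma key1:
  assumes "(N::nat) \<ge> 3" "i < 2*N" "j < 2*N" "d < 5"
  shows "dd N i j = d \<longleftrightarrow> j = (i + d) mod (2*N)"
proof -
  have a: "(j + 2*N - i) mod (2*N) = (if j + 2*N - i < 2*N then j + 2*N - i else j + 2*N - i - 2*N)"
    using assms by (intro mod2n) auto
  have b: "(i + d) mod (2*N) = (if i + d < 2*N then i+d else i + d - 2*N)"
    using assms by (intro mod2n) auto
  show ?thesis unfolding dd_def a b using assms by auto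
qed

lemma key2:
  assumes "(N::nat) \<ge> 3" "i < 2*N" "j < 2*N" "d < 5"
  shows "dd N i j = d \<longleftrightarrow> i = (j + 2*N - d) mod (2*N)"
proof -
  have a: "(j + 2*N - i) mod (2*N) = (if j + 2*N - i < 2*N then j + 2*N - i else j + 2*N - i - 2*N)"
    using assms by (intro mod2n) auto
  have b: "(j + 2*N - d) mod (2*N) = (if j + 2*N - d < 2*N then j + 2*N - d else j + 2*N - d - 2*N)"
    using assms by (intro mod2n) auto
  show ?thesis unfolding dd_def a b using assms by auto
qed

lemma dd_row:
  assumes "(N::nat) \<ge> 3" "i < 2*N" "d < 5"
  shows "dd N i ((i+d) mod (2*N)) = d"
proof -
  have "(i+d) mod (2*N) < 2*N" using assms by simp
  from key1[OF assms(1,2) this assms(3)] show ?thesis by simp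
qed

lemma dd_col:
  assumes "(N::nat) \<ge> 3" "j < 2*N" "d < 5"
  shows "dd N ((j + 2*N - d) mod (2*N)) j = d"
proof -
  have "(j + 2*N - d) mod (2*N) < 2*N" using assms by simp
  from key2[OF assms(1) this assms(2,3)] show ?thesis by simp
qed

lemma HA_row:
  assumes "(N::nat) \<ge> 3" "i < 2*N" "d < 5"
  shows "HA N i ((i+d) mod (2*N)) = Some (vv N (sw N i d) i)"
proof -
  have "dd N i ((i+d) mod (2*N)) = d" using dd_row[OF assms] .
  then show ?thesis using assms by (simp add: HA_def)
qed

lemma rowset:
  assumes "(N::nat) \<ge> 3" "i < 2*N"
  shows "{j. j < 2*N \<and> HA N i j \<noteq> None} = (\<lambda>d. (i+d) mod (2*N)) ` {..<5}"
proof
  show "{j. j < 2*N \<and> HA N i j \<noteq> None} \<subseteq> (\<lambda>d. (i+d) mod (2*N)) ` {..<5}"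
  proof
    fix j assume "j \<in> {j. j < 2*N \<and> HA N i j \<noteq> None}"
    then have j: "j < 2*N" "dd N i j < 5" by (auto simp: HA_def split: if_splits)
    then have "j = (i + dd N i j) mod (2*N)" using key1[OF assms(1,2) j(1) j(2)] by simp
    then show "j \<in> (\<lambda>d. (i+d) mod (2*N)) ` {..<5}" using j by auto
  qed
next
  show "(\<lambda>d. (i+d) mod (2*N)) ` {..<5} \<subseteq> {j. j < 2*N \<and> HA N i j \<noteq> None}"
    using HA_row[OF assms] assms by auto
qed

lemma rowinj:
  assumes "(N::nat) \<ge> 3" "i < 2*N"
  shows "inj_on (\<lambda>d. (i+d) mod (2*N)) {..<5}"
proof (rule inj_onI)
  fix d d' assume d: "d \<in> {..<5}" "d' \<in> {..<5}" and e: "(i+d) mod (2*N) = (i+d') mod (2*N)"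
  have h1: "dd N i ((i+d) mod (2*N)) = d" by (rule dd_row[OF assms]) (use d in auto)
  have h2: "dd N i ((i+d') mod (2*N)) = d'" by (rule dd_row[OF assms]) (use d in auto)
  show "d = d'" using h1 h2 e by metis
qed

lemma HA_col:
  assumes "(N::nat) \<ge> 3" "j < 2*N" "d < 5"
  shows "HA N ((j + 2*N - d) mod (2*N)) j = Some (vv N (sw N ((j + 2*N - d) mod (2*N)) d) ((j + 2*N - d) mod (2*N)))"
proof -
  have "dd N ((j + 2*N - d) mod (2*N)) j = d" using dd_col[OF assms] .
  then show ?thesis using assms by (simp add: HA_def)
qed

lemma colset:
  assumes "(N::nat) \<ge> 3" "j < 2*N"
  shows "{i. i < 2*N \<and> HA N i j \<noteq> None} = (\<lambda>d. (j + 2*N - d) mod (2*N)) ` {..<5}"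
proof
  show "{i. i < 2*N \<and> HA N i j \<noteq> None} \<subseteq> (\<lambda>d. (j + 2*N - d) mod (2*N)) ` {..<5}"
  proof
    fix i assume "i \<in> {i. i < 2*N \<and> HA N i j \<noteq> None}"
    then have i: "i < 2*N" "dd N i j < 5" by (auto simp: HA_def split: if_splits)
    then have "i = (j + 2*N - dd N i j) mod (2*N)" using key2[OF assms(1) i(1) assms(2) i(2)] by simp
    then show "i \<in> (\<lambda>d. (j + 2*N - d) mod (2*N)) ` {..<5}" using i by auto
  qed
next
  show "(\<lambda>d. (j + 2*N - d) mod (2*N)) ` {..<5} \<subseteq> {i. i < 2*N \<and> HA N i j \<noteq> None}"
    using HA_col[OF assms] assms by auto
qed

lemma colinj:
  assumes "(N::nat) \<ge> 3" "j < 2*N"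
  shows "inj_on (\<lambda>d. (j + 2*N - d) mod (2*N)) {..<5}"
proof (rule inj_onI)
  fix d d' assume d: "d \<in> {..<5}" "d' \<in> {..<5}" and e: "(j + 2*N - d) mod (2*N) = (j + 2*N - d') mod (2*N)"
  have h1: "dd N ((j + 2*N - d) mod (2*N)) j = d" by (rule dd_col[OF assms]) (use d in auto)
  have h2: "dd N ((j + 2*N - d') mod (2*N)) j = d'" by (rule dd_col[OF assms]) (use d in auto)
  show "d = d'" using h1 h2 e by metis
qed


lemma sw_id1: "x \<noteq> 2*N - 1 \<Longrightarrow> sw N x d = d"
  by (simp add: sw_def)
lemma sw_id2: "d \<noteq> 1 \<Longrightarrow> d \<noteq> 4 \<Longrightarrow> sw N x d = d"
  by (simp add: sw_def)

lemma q1: "(\<Sum>d<(5::nat). vv N (\<sigma> d) (Suc (2*a))) = vo N (\<sigma> 0) a + vo N (\<sigma> 1) a + vo N (\<sigma> 2) a + vo N (\<sigma> 3) a + vo N (\<sigma> 4) a"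
    unfolding sum5 by simp
lemma q2: "(\<Sum>d<(5::nat). vv N (\<sigma> d) (2*a)) = ve N (\<sigma> 0) a + ve N (\<sigma> 1) a + ve N (\<sigma> 2) a + ve N (\<sigma> 3) a + ve N (\<sigma> 4) a"
    unfolding sum5 by simp
lemma ve_sum: "(\<Sum>d<5. ve N d a) = 0" unfolding sum5 by (simp add: ve_def)
lemma vo_swap: "vo N (sw N i 1) a + vo N (sw N i 4) a = vo N 1 a + vo N 4 a" by (simp add: sw_def)
lemma vo_sum: "vo N 0 a + vo N 1 a + vo N 2 a + vo N 3 a + vo N 4 a = -(20*int N+1)" by (simp add: vo_def)

lemma rowsum:
  assumes "(N::nat) \<ge> 3" "i < 2*N"
  shows "(\<Sum>d<5. vv N (sw N i d) i) = 0 \<or> (\<Sum>d<5. vv N (sw N i d) i) = -(20*int N+1)"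
proof (cases "even i")
  case True
  then obtain a where a: "i = 2*a" by blast
  have "i \<noteq> 2*N - 1" using a assms by presburger
  then have sw: "sw N i d = d" for d by (rule sw_id1)
  have "(\<Sum>d<5. vv N (sw N i d) i) = (\<Sum>d<5. ve N d a)"
    using q2[of N "sw N i" a] unfolding a[symmetric] sw sum5 by simp
  also have "\<dots> = 0" by (rule ve_sum)
  finally show ?thesis by simp
next
  case False
  define a where "a = i div 2"
  have a: "i = Suc (2*a)" using False unfolding a_def by presburger
  have "(\<Sum>d<5. vv N (sw N i d) i) = vo N 0 a + vo N (sw N i 1) a + vo N 2 a + vo N 3 a + vo N (sw N i 4) a"
    using q1[of N "sw N i" a] unfolding a[symmetric] by (simp add: sw_id2)
  also have "\<dots> = vo N 0 a + vo N 1 a + vo N 2 a + vo N 3 a + vo N 4 a"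
    using vo_swap[of N i a] by linarith
  also have "\<dots> = -(20*int N+1)" by (rule vo_sum)
  finally show ?thesis by simp
qed


lemma cmod:
  assumes "(N::nat) \<ge> 3" "j < 2*N" "d < 5"
  shows "(j + 2*N - d) mod (2*N) = (if d \<le> j then j - d else j + 2*N - d)"
proof -
  have "(j + 2*N - d) mod (2*N) = (if j + 2*N - d < 2*N then j + 2*N - d else j + 2*N - d - 2*N)"
    using assms by (intro mod2n) auto
  then show ?thesis using assms by auto
qed

lemma q3: "(\<Sum>d<(5::nat). vv N (sw N (c d) d) (c d)) =
   vv N (sw N (c 0) 0) (c 0) + vv N (sw N (c 1) 1) (c 1) + vv N (sw N (c 2) 2) (c 2) + vv N (sw N (c 3) 3) (c 3) + vv N (sw N (c 4) 4) (c 4)"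
  by (rule sum5)

lemma colsum:
  assumes N: "(N::nat) \<ge> 3" and j: "j < 2*N"
  shows "(\<Sum>d<5. vv N (sw N ((j + 2*N - d) mod (2*N)) d) ((j + 2*N - d) mod (2*N))) = (if even j then -(20*int N+1) else 0)"
proof -
  define c where "c d = (j + 2*N - d) mod (2*N)" for d
  have cm: "c d = (if d \<le> j then j - d else j + 2*N - d)" if "d < 5" for d
    unfolding c_def using cmod[OF N j that] .
  have c0: "c 0 = j" using cm[of 0] by simp
  have c1: "c 1 = (if 1 \<le> j then j - 1 else j + 2*N - 1)" using cm[of 1] by simp
  have c2: "c 2 = (if 2 \<le> j then j - 2 else j + 2*N - 2)" using cm[of 2] by simp
  have c3: "c 3 = (if 3 \<le> j then j - 3 else j + 2*N - 3)" using cm[of 3] by simp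
  have c4: "c 4 = (if 4 \<le> j then j - 4 else j + 2*N - 4)" using cm[of 4] by simp
  have s0: "sw N x 0 = 0" "sw N x 2 = 2" "sw N x 3 = 3" for x by (simp_all add: sw_id2)
  have "(\<Sum>d<5. vv N (sw N ((j + 2*N - d) mod (2*N)) d) ((j + 2*N - d) mod (2*N)))
     = (\<Sum>d<(5::nat). vv N (sw N (c d) d) (c d))" unfolding c_def by simp
  also have "\<dots> = vv N (sw N (c 0) 0) (c 0) + vv N (sw N (c 1) 1) (c 1) + vv N (sw N (c 2) 2) (c 2) + vv N (sw N (c 3) 3) (c 3) + vv N (sw N (c 4) 4) (c 4)"
    by (rule q3)
  also have "\<dots> = vv N 0 (c 0) + vv N (sw N (c 1) 1) (c 1) + vv N 2 (c 2) + vv N 3 (c 3) + vv N (sw N (c 4) 4) (c 4)"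
    by (simp only: s0)
  also have "\<dots> = (if even j then -(20*int N+1) else 0)"
  proof (cases "j \<ge> 4")
    case True
    show ?thesis
    proof (cases "even j")
      case True
      define a where "a = j div 2"
      have a: "j = 2*a" using True unfolding a_def by presburger
      have a2: "a \<ge> 2" "a < N" using \<open>j \<ge> 4\<close> j a by auto
      have e0: "c 0 = 2*a" using c0 a by simp
      have e1: "c 1 = Suc (2*(a-1))" using c1 a a2 by simp
      have e2: "c 2 = 2*(a-1)" using c2 a a2 by simp
      have e3: "c 3 = Suc (2*(a-2))" using c3 a a2 by simp
      have e4: "c 4 = 2*(a-2)" using c4 a a2 by simp
      have w1: "sw N (c 1) 1 = 1" using e1 a2 by (intro sw_id1) simp
      have w4: "sw N (c 4) 4 = 4" using e4 a2 by (intro sw_id1) simp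
      have "vv N 0 (c 0) + vv N (sw N (c 1) 1) (c 1) + vv N 2 (c 2) + vv N 3 (c 3) + vv N (sw N (c 4) 4) (c 4)
         = ve N 0 a + vo N 1 (a-1) + ve N 2 (a-1) + vo N 3 (a-2) + ve N 4 (a-2)"
        unfolding w1 w4 unfolding e0 e1 e2 e3 e4 by simp
      also have "\<dots> = -(20*int N+1)" using a2 by (simp add: ve_def vo_def of_nat_diff)
      finally show ?thesis using True by simp
    next
      case False
      define a where "a = j div 2"
      have a: "j = Suc (2*a)" using False unfolding a_def by presburger
      have a2: "a \<ge> 2" "a < N" using \<open>j \<ge> 4\<close> j a by auto
      have e0: "c 0 = Suc (2*a)" using c0 a by simp
      have e1: "c 1 = 2*a" using c1 a a2 by simp
      have e2: "c 2 = Suc (2*(a-1))" using c2 a a2 by simp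
      have e3: "c 3 = 2*(a-1)" using c3 a a2 by simp
      have e4: "c 4 = Suc (2*(a-2))" using c4 a a2 by simp
      have w1: "sw N (c 1) 1 = 1" using e1 a2 by (intro sw_id1) presburger
      have w4: "sw N (c 4) 4 = 4" using e4 a2 by (intro sw_id1) simp
      have "vv N 0 (c 0) + vv N (sw N (c 1) 1) (c 1) + vv N 2 (c 2) + vv N 3 (c 3) + vv N (sw N (c 4) 4) (c 4)
         = vo N 0 a + ve N 1 a + vo N 2 (a-1) + ve N 3 (a-1) + vo N 4 (a-2)"
        unfolding w1 w4 unfolding e0 e1 e2 e3 e4 by simp
      also have "\<dots> = 0" using a2 by (simp add: ve_def vo_def of_nat_diff)
      finally show ?thesis using False by simp
    qed
  next
    case False
    then have "j = 0 \<or> j = 1 \<or> j = 2 \<or> j = 3" by auto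
    moreover have nn: "2*N - 1 = Suc (2*(N-1))" "2*N - 2 = 2*(N-1)" "2*N - 3 = Suc (2*(N-2))" "2*N - 4 = 2*(N-2)"
      using N by auto
    moreover have "int (N-1) = int N - 1" "int (N-2) = int N - 2" using N by auto
    ultimately show ?thesis
    proof (elim disjE)
      assume j0: "j = 0"
      have e: "c 0 = 2*0" "c 1 = Suc (2*(N-1))" "c 2 = 2*(N-1)" "c 3 = Suc (2*(N-2))" "c 4 = 2*(N-2)"
        using c0 c1 c2 c3 c4 j0 N by auto
      have w1: "sw N (c 1) 1 = 4" using e N by (simp add: sw_def)
      have w4: "sw N (c 4) 4 = 4" using e N by (intro sw_id1) simp
      have "vv N 0 (c 0) + vv N (sw N (c 1) 1) (c 1) + vv N 2 (c 2) + vv N 3 (c 3) + vv N (sw N (c 4) 4) (c 4)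
         = ve N 0 0 + vo N 4 (N-1) + ve N 2 (N-1) + vo N 3 (N-2) + ve N 4 (N-2)"
        unfolding w1 w4 unfolding e by (simp only: vv_even vv_odd)
      also have "\<dots> = -(20*int N+1)" using N by (simp add: ve_def vo_def of_nat_diff)
      finally show ?thesis using j0 by simp
    next
      assume j0: "j = 1"
      have e: "c 0 = Suc (2*0)" "c 1 = 2*0" "c 2 = Suc (2*(N-1))" "c 3 = 2*(N-1)" "c 4 = Suc (2*(N-2))"
        using c0 c1 c2 c3 c4 j0 N by auto
      have w1: "sw N (c 1) 1 = 1" using e N by (intro sw_id1) simp
      have w4: "sw N (c 4) 4 = 4" using e N by (intro sw_id1) simp
      have "vv N 0 (c 0) + vv N (sw N (c 1) 1) (c 1) + vv N 2 (c 2) + vv N 3 (c 3) + vv N (sw N (c 4) 4) (c 4)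
         = vo N 0 0 + ve N 1 0 + vo N 2 (N-1) + ve N 3 (N-1) + vo N 4 (N-2)"
        unfolding w1 w4 unfolding e by (simp only: vv_even vv_odd)
      also have "\<dots> = 0" using N by (simp add: ve_def vo_def of_nat_diff)
      finally show ?thesis using j0 by simp
    next
      assume j0: "j = 2"
      have e: "c 0 = 2*1" "c 1 = Suc (2*0)" "c 2 = 2*0" "c 3 = Suc (2*(N-1))" "c 4 = 2*(N-1)"
        using c0 c1 c2 c3 c4 j0 N by auto
      have w1: "sw N (c 1) 1 = 1" using e N by (intro sw_id1) simp
      have w4: "sw N (c 4) 4 = 4" using e N by (intro sw_id1) simp
      have "vv N 0 (c 0) + vv N (sw N (c 1) 1) (c 1) + vv N 2 (c 2) + vv N 3 (c 3) + vv N (sw N (c 4) 4) (c 4)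
         = ve N 0 1 + vo N 1 0 + ve N 2 0 + vo N 3 (N-1) + ve N 4 (N-1)"
        unfolding w1 w4 unfolding e by (simp only: vv_even vv_odd)
      also have "\<dots> = -(20*int N+1)" using N by (simp add: ve_def vo_def of_nat_diff)
      finally show ?thesis using j0 by simp
    next
      assume j0: "j = 3"
      have e: "c 0 = Suc (2*1)" "c 1 = 2*1" "c 2 = Suc (2*0)" "c 3 = 2*0" "c 4 = Suc (2*(N-1))"
        using c0 c1 c2 c3 c4 j0 N by auto
      have w1: "sw N (c 1) 1 = 1" using e N by (intro sw_id1) simp
      have w4: "sw N (c 4) 4 = 1" using e N by (simp add: sw_def)
      have "vv N 0 (c 0) + vv N (sw N (c 1) 1) (c 1) + vv N 2 (c 2) + vv N 3 (c 3) + vv N (sw N (c 4) 4) (c 4)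
         = vo N 0 1 + ve N 1 1 + vo N 2 0 + ve N 3 0 + vo N 1 (N-1)"
        unfolding w1 w4 unfolding e by (simp only: vv_even vv_odd)
      also have "\<dots> = 0" using N by (simp add: ve_def vo_def of_nat_diff)
      finally show ?thesis using j0 by simp
    qed
  qed
  finally show ?thesis .
qed


lemma d5: "(d::nat) < 5 \<Longrightarrow> d = 0 \<or> d = 1 \<or> d = 2 \<or> d = 3 \<or> d = 4" by auto

lemma vbound:
  assumes "d < 5" "i < 2*N"
  shows "1 \<le> \<bar>vv N d i\<bar> \<and> \<bar>vv N d i\<bar> \<le> 10 * int N"
proof -
  define a where "a = i div 2"
  have aN: "int a < int N" using assms unfolding a_def by simp
  show ?thesis
  proof (cases "even i")
    case True
    then have "vv N d i = ve N d a" unfolding a_def vv_def by simp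
    then show ?thesis using d5[OF assms(1)] aN by (auto simp: ve_def)
  next
    case False
    then have "vv N d i = vo N d a" unfolding a_def vv_def by simp
    then show ?thesis using d5[OF assms(1)] aN by (auto simp: vo_def)
  qed
qed

lemma wit: "d < 5 \<Longrightarrow> i < 2*N \<Longrightarrow> \<bar>vv N d i\<bar> = int x \<Longrightarrow> \<exists>d<5. \<exists>i<2*N. \<bar>vv N d i\<bar> = int x"
  by blast

lemma vexist:
  assumes "1 \<le> x" "x \<le> 10*N"
  shows "\<exists>d<5. \<exists>i<2*N. \<bar>vv N d i\<bar> = int x"
proof -
  consider "x \<le> N" | "N < x \<and> x \<le> 2*N" | "2*N < x \<and> x \<le> 3*N" | "3*N < x \<and> x \<le> 4*N"
    | "4*N < x \<and> x \<le> 5*N" | "5*N < x \<and> x \<le> 7*N \<and> odd (x - 5*N)" | "5*N < x \<and> x \<le> 7*N \<and> even (x - 5*N)"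
    | "7*N < x \<and> x \<le> 8*N" | "8*N < x \<and> x \<le> 9*N" | "9*N < x" using assms by linarith
  then show ?thesis
  proof cases
    case 1 show ?thesis by (rule wit[of 0 "2*(x-1)"]) (use 1 assms in \<open>auto simp: ve_def\<close>)
  next
    case 2 show ?thesis by (rule wit[of 4 "2*(x-N-1)"]) (use 2 assms in \<open>auto simp: ve_def of_nat_diff\<close>)
  next
    case 3 show ?thesis by (rule wit[of 1 "2*(x-2*N-1)"]) (use 3 assms in \<open>auto simp: ve_def of_nat_diff\<close>)
  next
    case 4 show ?thesis by (rule wit[of 3 "Suc (2*(4*N-x))"]) (use 4 assms in \<open>auto simp: vo_def of_nat_diff\<close>)
  next
    case 5 show ?thesis by (rule wit[of 3 "2*(x-4*N-1)"]) (use 5 assms in \<open>auto simp: ve_def of_nat_diff\<close>)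
  next
    case 6
    define a where "a = (x - 5*N - 1) div 2"
    have a: "x = 5*N + 1 + 2*a" "a < N" using 6 unfolding a_def by presburger+
    show ?thesis by (rule wit[of 2 "Suc (2*a)"]) (use a in \<open>auto simp: vo_def\<close>)
  next
    case 7
    define a where "a = (x - 5*N - 2) div 2"
    have a: "x = 5*N + 2 + 2*a" "a < N" using 7 unfolding a_def by presburger+
    show ?thesis by (rule wit[of 2 "2*a"]) (use a in \<open>auto simp: ve_def\<close>)
  next
    case 8 show ?thesis by (rule wit[of 0 "Suc (2*(8*N-x))"]) (use 8 assms in \<open>auto simp: vo_def of_nat_diff\<close>)
  next
    case 9 show ?thesis by (rule wit[of 4 "Suc (2*(9*N-x))"]) (use 9 assms in \<open>auto simp: vo_def of_nat_diff\<close>)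
  next
    case 10 show ?thesis by (rule wit[of 1 "Suc (2*(10*N-x))"]) (use 10 assms in \<open>auto simp: vo_def of_nat_diff\<close>)
  qed
qed


lemma mm: "(- (20 * int N) - 1) mod (20 * int N + 1) = 0"
proof -
  have e: "- (20 * int N) - 1 = (-1) * (20*int N+1)" by simp
  show ?thesis unfolding e by (rule mod_mult_self2_is_0)
qed

lemma sw_lt: "d < 5 \<Longrightarrow> sw N i d < 5" by (simp add: sw_def)

lemma HA_some:
  assumes "HA N i j = Some e"
  shows "i < 2*N" "j < 2*N" "dd N i j < 5" "e = vv N (sw N i (dd N i j)) i"
  using assms by (auto simp: HA_def split: if_splits)

lemma HA_heffter:
  assumes N: "(N::nat) \<ge> 3"
  shows "heffter (2*N) 5 (HA N)"
proof -
  let ?n = "2*N"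
  have M: "2 * int ?n * int 5 + 1 = 20 * int N + 1" by simp
  have c1: "\<forall>i j. HA N i j \<noteq> None \<longrightarrow> i < ?n \<and> j < ?n" by (auto simp: HA_def)
  have c2: "\<forall>i j e. HA N i j = Some e \<longrightarrow> e \<noteq> 0"
  proof (intro allI impI)
    fix i j e assume h: "HA N i j = Some e"
    from HA_some[OF h] have "1 \<le> \<bar>e\<bar>" using vbound[OF sw_lt] by auto
    then show "e \<noteq> 0" by auto
  qed
  have c3: "\<forall>i<?n. card {j. j < ?n \<and> HA N i j \<noteq> None} = 5"
    using rowset[OF N] rowinj[OF N] by (simp add: card_image)
  have c4: "\<forall>j<?n. card {i. i < ?n \<and> HA N i j \<noteq> None} = 5"
    using colset[OF N] colinj[OF N] by (simp add: card_image)
  have c5: "\<forall>i<?n. (\<Sum>j\<in>{j. j < ?n \<and> HA N i j \<noteq> None}. the (HA N i j)) mod (2 * int ?n * int 5 + 1) = 0"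
  proof (intro allI impI)
    fix i assume i: "i < ?n"
    have "(\<Sum>j\<in>{j. j < ?n \<and> HA N i j \<noteq> None}. the (HA N i j)) = (\<Sum>d<5. the (HA N i ((i+d) mod ?n)))"
      unfolding rowset[OF N i] using rowinj[OF N i] by (simp add: sum.reindex)
    also have "\<dots> = (\<Sum>d<5. vv N (sw N i d) i)" using HA_row[OF N i] by simp
    finally show "(\<Sum>j\<in>{j. j < ?n \<and> HA N i j \<noteq> None}. the (HA N i j)) mod (2 * int ?n * int 5 + 1) = 0"
      using rowsum[OF N i] mm unfolding M by auto
  qed
  have c6: "\<forall>j<?n. (\<Sum>i\<in>{i. i < ?n \<and> HA N i j \<noteq> None}. the (HA N i j)) mod (2 * int ?n * int 5 + 1) = 0"
  proof (intro allI impI)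
    fix j assume j: "j < ?n"
    have "(\<Sum>i\<in>{i. i < ?n \<and> HA N i j \<noteq> None}. the (HA N i j)) = (\<Sum>d<5. the (HA N ((j + 2*N - d) mod ?n) j))"
      unfolding colset[OF N j] using colinj[OF N j] by (simp add: sum.reindex)
    also have "\<dots> = (\<Sum>d<5. vv N (sw N ((j + 2*N - d) mod (2*N)) d) ((j + 2*N - d) mod (2*N)))"
      using HA_col[OF N j] by simp
    finally show "(\<Sum>i\<in>{i. i < ?n \<and> HA N i j \<noteq> None}. the (HA N i j)) mod (2 * int ?n * int 5 + 1) = 0"
      using colsum[OF N j] mm unfolding M by auto
  qed
  define C where "C = {p \<in> {0..<?n} \<times> {0..<?n}. HA N (fst p) (snd p) \<noteq> None}"
  define g where "g p = nat \<bar>the (HA N (fst p) (snd p))\<bar>" for p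
  have CS: "C = Sigma {..<?n} (\<lambda>i. {j. j < ?n \<and> HA N i j \<noteq> None})" unfolding C_def by auto
  have finC: "finite C" unfolding C_def by (rule finite_subset[of _ "{0..<?n} \<times> {0..<?n}"]) auto
  have cardC: "card C = 10 * N"
    unfolding CS using c3 by (subst card_SigmaI) auto
  have gsub: "g ` C \<subseteq> {1..10*N}"
  proof
    fix y assume "y \<in> g ` C"
    then obtain p where p: "p \<in> C" "y = g p" by blast
    then obtain e where e: "HA N (fst p) (snd p) = Some e" unfolding C_def by auto
    from HA_some[OF e] have "1 \<le> \<bar>e\<bar> \<and> \<bar>e\<bar> \<le> 10 * int N" using vbound[OF sw_lt] by auto
    then show "y \<in> {1..10*N}" using p e unfolding g_def by auto
  qed
  have exi: "\<exists>p\<in>C. HA N (fst p) (snd p) = Some (int x) \<or> HA N (fst p) (snd p) = Some (- int x)"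
    if x: "1 \<le> x" "x \<le> 10*N" for x
  proof -
    obtain d i where di: "d < 5" "i < ?n" "\<bar>vv N d i\<bar> = int x" using vexist[OF x] by blast
    let ?e = "sw N i d"
    have e5: "?e < 5" using sw_lt[OF di(1)] .
    have ee: "sw N i ?e = d" using di(1) by (auto simp: sw_def)
    have h: "HA N i ((i + ?e) mod ?n) = Some (vv N d i)" using HA_row[OF N di(2) e5] ee by simp
    have "(i, (i + ?e) mod ?n) \<in> C" unfolding C_def using h di N by auto
    then show ?thesis using h di(3) by (intro bexI[of _ "(i, (i + ?e) mod ?n)"]) auto
  qed
  have gsup: "{1..10*N} \<subseteq> g ` C"
  proof
    fix y assume "y \<in> {1..10*N}"
    then obtain p where p: "p \<in> C" "HA N (fst p) (snd p) = Some (int y) \<or> HA N (fst p) (snd p) = Some (- int y)"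
      using exi by force
    then have "g p = y" unfolding g_def by auto
    then show "y \<in> g ` C" using p by blast
  qed
  have gC: "g ` C = {1..10*N}" using gsub gsup by blast
  have inj: "inj_on g C" using finC by (rule eq_card_imp_inj_on) (simp add: gC cardC)
  have c7: "\<forall>x::int. 1 \<le> x \<and> x \<le> int ?n * int 5 \<longrightarrow>
        (\<exists>!p. p \<in> {0..<?n} \<times> {0..<?n} \<and>
              (HA N (fst p) (snd p) = Some x \<or> HA N (fst p) (snd p) = Some (- x)))"
  proof (intro allI impI)
    fix x :: int assume x: "1 \<le> x \<and> x \<le> int ?n * int 5"
    define y where "y = nat x"
    have xy: "x = int y" "1 \<le> y" "y \<le> 10*N" using x unfolding y_def by auto
    obtain p where p: "p \<in> C" "HA N (fst p) (snd p) = Some x \<or> HA N (fst p) (snd p) = Some (- x)"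
      using exi[OF xy(2,3)] xy(1) by blast
    show "\<exists>!p. p \<in> {0..<?n} \<times> {0..<?n} \<and> (HA N (fst p) (snd p) = Some x \<or> HA N (fst p) (snd p) = Some (- x))"
    proof (rule ex1I[of _ p])
      show "p \<in> {0..<?n} \<times> {0..<?n} \<and> (HA N (fst p) (snd p) = Some x \<or> HA N (fst p) (snd p) = Some (- x))"
        using p unfolding C_def by auto
    next
      fix p' assume p': "p' \<in> {0..<?n} \<times> {0..<?n} \<and> (HA N (fst p') (snd p') = Some x \<or> HA N (fst p') (snd p') = Some (- x))"
      then have "p' \<in> C" unfolding C_def by auto
      moreover have "g p' = g p" using p p' unfolding g_def by auto
      ultimately show "p' = p" using inj p(1) by (auto dest: inj_onD)
    qed
  qed
  show ?thesis unfolding heffter_def using c1 c2 c3 c4 c5 c6 c7 by blast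
qed

theorem lemma7p1:
  fixes n :: nat
  assumes "n mod 4 = 2" and "n \<ge> 6"
  shows "heffter_exists n 5"
proof -
  define N where "N = n div 2"
  have n: "n = 2*N" "N \<ge> 3" using assms unfolding N_def by presburger+
  show ?thesis unfolding heffter_exists_def n(1) using HA_heffter[OF n(2)] by blast
qed

end
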